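(* Let $\epsilon>0$. Then $\hat\Psi(u)\neq\emptyset$ for every $u\in\mathbb{R}^k$ if and only if $\epsilon\in(0,\tfrac{1}{2k}]$.
   Context: $[k]=\{1,\dots,k\}$, $\mathcal{Y}=\{-1,1\}^k$, $\mathcal{V}=\{-1,0,1\}^k$. $u\odot u'$ entrywise product, $|u|$ entrywise absolute value, $\mathbbm{1}$ all-ones; $\boxed{u}=\mathrm{sign}(u)\odot\min(|u|,\mathbbm{1})$. For $A\subseteq\mathbb{R}^k$, $d_\infty(A,u)=\inf_{a\in A}\|a-u\|_\infty$. For a permutation $\pi$ of $[k]$ and $i\in\{0,\dots,k\}$, $\mathbbm{1}_{\pi,i}$ is the indicator vector of $\{\pi_1,\dots,\pi_i\}$; $V_{\pi,y}=\{\mathbbm{1}_{\pi,i}\odot y: i=0,\dots,k\}$; $\mathcal{V}^{\text{face}}=\bigcup_{\pi,y\in\mathcal{Y}}2^{V_{\pi,y}}$; $\hat\Psi(u)=\bigcap\{V\in\mathcal{V}^{\text{face}}:d_\infty(\mathrm{conv}\,V,\boxed{u})<\epsilon\}$. *)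

theory Defs
  imports "HOL-Analysis.Analysis"
begin

text \<open>Vectors in R^k are modelled as real^'k, with k = CARD('k).
  A permutation pi of [k] is a bijection from {1..k} onto the index type.\<close>

definition linf :: "real^'k \<Rightarrow> real" where
  "linf v = Max (range (\<lambda>j. \<bar>v $ j\<bar>))"

text \<open>d_infty(A,u) = inf over a in A of the sup-norm distance; taken in ereal so
  that the infimum over the empty set is +infinity.\<close>
definition dinf :: "(real^'k) set \<Rightarrow> real^'k \<Rightarrow> ereal" where
  "dinf A u = Inf ((\<lambda>a. ereal (linf (a - u))) ` A)"

definition boxed :: "real^'k \<Rightarrow> real^'k" where
  "boxed u = (\<chi> j. sgn (u $ j) * min \<bar>u $ j\<bar> 1)"

definition is_perm :: "(nat \<Rightarrow> 'k::finite) \<Rightarrow> bool" where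
  "is_perm \<pi> \<longleftrightarrow> bij_betw \<pi> {1..CARD('k)} (UNIV :: 'k set)"

definition ind_perm :: "(nat \<Rightarrow> 'k::finite) \<Rightarrow> nat \<Rightarrow> real^'k" where
  "ind_perm \<pi> i = (\<chi> j. if j \<in> \<pi> ` {1..i} then 1 else 0)"

definition signvecs :: "(real^'k::finite) set" where
  "signvecs = {y. \<forall>j. y $ j \<in> {-1, 1}}"

definition Vpy :: "(nat \<Rightarrow> 'k::finite) \<Rightarrow> real^'k \<Rightarrow> (real^'k) set" where
  "Vpy \<pi> y = {ind_perm \<pi> i * y | i. i \<le> CARD('k)}"

definition Vface :: "(real^'k::finite) set set" where
  "Vface = (\<Union>\<pi>\<in>{\<pi>. is_perm \<pi>}. \<Union>y\<in>signvecs. Pow (Vpy \<pi> y))"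

definition psi_hat :: "real \<Rightarrow> real^'k::finite \<Rightarrow> (real^'k) set" where
  "psi_hat \<epsilon> u = \<Inter> {V \<in> Vface. dinf (convex hull V) (boxed u) < ereal \<epsilon>}"

end

theory Submission
  imports Defs
begin


lemma thresh:
  fixes t :: "'a \<Rightarrow> real"
  assumes "finite J" "\<epsilon> > 0" "2 * \<epsilon> * real (card J) \<le> hi - lo"
  shows "\<exists>c. lo \<le> c \<and> c \<le> hi \<and> (\<forall>j\<in>J. \<bar>t j - c\<bar> \<ge> \<epsilon>)"
  using assms
proof (induction "card J" arbitrary: J lo hi rule: less_induct)
  case less
  show ?case
  proof (cases "J = {}")
    case True
    then show ?thesis using less.prems by auto
  next
    case False
    then obtain j0 where j0: "j0 \<in> J" by blast
    define t0 where "t0 = t j0"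
    define J1 where "J1 = {j\<in>J - {j0}. t j \<le> t0}"
    define J2 where "J2 = {j\<in>J - {j0}. t j > t0}"
    have fin1: "finite J1" "finite J2" using less.prems(1) by (auto simp: J1_def J2_def)
    have disj: "J1 \<inter> J2 = {}" "J1 \<union> J2 = J - {j0}" by (auto simp: J1_def J2_def)
    have cardsum: "card J1 + card J2 = card J - 1"
    proof -
      have "card J1 + card J2 = card (J - {j0})" using card_Un_disjoint[OF fin1 disj(1)] disj(2) by simp
      also have "\<dots> = card J - 1" using j0 less.prems(1) by (simp add: card_Diff_singleton)
      finally show ?thesis .
    qed
    have cJ: "card J \<ge> 1" using j0 less.prems(1) by (auto simp: Suc_le_eq card_gt_0_iff)
    have lt1: "card J1 < card J" and lt2: "card J2 < card J" using cardsum cJ by auto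
    have rs: "real (card J1) + real (card J2) = real (card J) - 1"
    proof -
      have "real (card J1) + real (card J2) = real (card J1 + card J2)" by simp
      also have "\<dots> = real (card J - 1)" using cardsum by simp
      also have "\<dots> = real (card J) - 1" using cJ by (simp add: of_nat_diff)
      finally show ?thesis .
    qed
    show ?thesis
    proof (cases "2 * \<epsilon> * real (card J1) \<le> min hi (t0 - \<epsilon>) - lo")
      case True
      from less.hyps[OF lt1 fin1(1) less.prems(2) True] obtain c where
        c: "lo \<le> c" "c \<le> min hi (t0 - \<epsilon>)" "\<forall>j\<in>J1. \<epsilon> \<le> \<bar>t j - c\<bar>" by blast
      have "\<forall>j\<in>J. \<epsilon> \<le> \<bar>t j - c\<bar>"
      proof
        fix j assume "j \<in> J"
        then consider "j = j0" | "j \<in> J1" | "j \<in> J2" using disj by blast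
        then show "\<epsilon> \<le> \<bar>t j - c\<bar>"
        proof cases
          case 1
          have "c \<le> t0 - \<epsilon>" using c(2) by simp
          moreover from 1 have "t j = t0" by (simp add: t0_def)
          ultimately show ?thesis by linarith
        next
          case 2 then show ?thesis using c(3) by blast
        next
          case 3 then have "t j > t0" by (simp add: J2_def)
          moreover have "c \<le> t0 - \<epsilon>" using c(2) by simp
          ultimately show ?thesis by linarith
        qed
      qed
      then show ?thesis using c by auto
    next
      case False
      have F: "2 * \<epsilon> * real (card J2) \<le> hi - max lo (t0 + \<epsilon>)"
      proof -
        have n1: "2 * \<epsilon> * real (card J1) \<ge> 0" and n2: "2 * \<epsilon> * real (card J2) \<ge> 0"
          using less.prems(2) by simp_all
        have sm: "2 * \<epsilon> * real (card J1) + 2 * \<epsilon> * real (card J2) = 2 * \<epsilon> * real (card J) - 2 * \<epsilon>"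
        proof -
          have "2 * \<epsilon> * real (card J1) + 2 * \<epsilon> * real (card J2) = 2 * \<epsilon> * (real (card J1) + real (card J2))"
            by (simp only: distrib_left)
          also have "\<dots> = 2 * \<epsilon> * real (card J) - 2 * \<epsilon>" unfolding rs by (simp only: right_diff_distrib mult_1_right)
          finally show ?thesis .
        qed
        have key: "a2 \<le> hi - max lo (t0 + \<epsilon>)" if "a1 \<ge> 0" "a2 \<ge> 0" "a1 + a2 = aJ - 2 * \<epsilon>" "\<not> a1 \<le> min hi (t0 - \<epsilon>) - lo" "aJ \<le> hi - lo" for a1 a2 aJ :: real
        proof -
          have "min hi (t0 - \<epsilon>) = hi \<or> min hi (t0 - \<epsilon>) = t0 - \<epsilon>" by linarith
          moreover have "max lo (t0 + \<epsilon>) = lo \<or> max lo (t0 + \<epsilon>) = t0 + \<epsilon>" by linarith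
          moreover have "min hi (t0 - \<epsilon>) \<le> hi" "min hi (t0 - \<epsilon>) \<le> t0 - \<epsilon>" "max lo (t0 + \<epsilon>) \<ge> lo" "max lo (t0 + \<epsilon>) \<ge> t0 + \<epsilon>" by simp_all
          ultimately show ?thesis using that less.prems(2) by linarith
        qed
        show ?thesis by (rule key[OF n1 n2 sm False less.prems(3)])
      qed
      from less.hyps[OF lt2 fin1(2) less.prems(2) F] obtain c where
        c: "max lo (t0 + \<epsilon>) \<le> c" "c \<le> hi" "\<forall>j\<in>J2. \<epsilon> \<le> \<bar>t j - c\<bar>" by blast
      have "\<forall>j\<in>J. \<epsilon> \<le> \<bar>t j - c\<bar>"
      proof
        fix j assume "j \<in> J"
        then consider "j = j0" | "j \<in> J1" | "j \<in> J2" using disj by blast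
        then show "\<epsilon> \<le> \<bar>t j - c\<bar>"
        proof cases
          case 1
          have "c \<ge> t0 + \<epsilon>" using c(1) by simp
          moreover from 1 have "t j = t0" by (simp add: t0_def)
          ultimately show ?thesis by linarith
        next
          case 3 then show ?thesis using c(3) by blast
        next
          case 2 then have "t j \<le> t0" by (simp add: J1_def)
          moreover have "c \<ge> t0 + \<epsilon>" using c(1) by simp
          ultimately show ?thesis by linarith
        qed
      qed
      then show ?thesis using c by auto
    qed
  qed
qed

lemma downclosed:
  fixes P :: "nat set"
  assumes "finite P" "0 \<notin> P" "\<And>q p. q \<in> P \<Longrightarrow> 1 \<le> p \<Longrightarrow> p \<le> q \<Longrightarrow> p \<in> P"
  shows "P = {1..card P}"
proof (cases "P = {}")
  case True then show ?thesis by simp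
next
  case False
  define M where "M = Max P"
  have "M \<in> P" using False assms(1) M_def by simp
  have "P = {1..M}"
  proof
    show "P \<subseteq> {1..M}" using assms(1,2) M_def
      by (auto simp: Suc_le_eq intro: Max_ge) (metis gr0I)
    show "{1..M} \<subseteq> P" using assms(3) \<open>M \<in> P\<close> by auto
  qed
  then show ?thesis by simp
qed

lemma hull_ge:
  fixes L :: "real^'k \<Rightarrow> real"
  assumes aff: "\<And>x x' a b. a \<ge> 0 \<Longrightarrow> b \<ge> 0 \<Longrightarrow> a + b = 1 \<Longrightarrow> L (a *\<^sub>R x + b *\<^sub>R x') = a * L x + b * L x'"
    and V: "\<forall>z\<in>V. L z \<ge> 0" and x: "x \<in> convex hull V"
  shows "L x \<ge> 0"
proof -
  have "convex {x. L x \<ge> 0}"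
    unfolding convex_def using aff by (auto intro!: add_nonneg_nonneg mult_nonneg_nonneg)
  then have "convex hull V \<subseteq> {x. L x \<ge> 0}" using V by (intro hull_minimal) auto
  then show ?thesis using x by blast
qed




lemma key:
  fixes \<pi> :: "nat \<Rightarrow> 'k::finite" and y v x :: "real^'k"
  assumes perm: "is_perm \<pi>" and ys: "y \<in> signvecs" and VV: "V \<subseteq> Vpy \<pi> y"
    and xh: "x \<in> convex hull V" and xv: "\<forall>j. \<bar>x$j - v$j\<bar> < \<epsilon>"
    and vc: "\<forall>j. \<bar>\<bar>v$j\<bar> - c\<bar> \<ge> \<epsilon>" and c0: "0 \<le> c" and c1: "c \<le> 1" and e: "\<epsilon> > 0"
  shows "(\<chi> j. if c < \<bar>v$j\<bar> then sgn (v$j) else 0) \<in> V"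
proof -
  let ?k = "CARD('k)"
  have inj: "inj_on \<pi> {1..?k}" and surj: "\<pi> ` {1..?k} = UNIV"
    using perm by (auto simp: is_perm_def bij_betw_def)
  have kpos: "?k \<ge> 1" by (simp add: Suc_le_eq)
  have y1: "y$j = 1 \<or> y$j = -1" for j using ys by (auto simp: signvecs_def)
  have ysq: "y$j * y$j = 1" for j using y1[of j] by auto
  define A where "A x p = (if p = 0 then 1 else if p \<le> ?k then y$(\<pi> p) * x$(\<pi> p) else 0)"
    for x :: "real^'k" and p
  define z where "z i = ind_perm \<pi> i * y" for i
  have indc: "ind_perm \<pi> i $ (\<pi> p) = (if p \<le> i then 1 else 0)"
    if "1 \<le> p" "p \<le> ?k" "i \<le> ?k" for i p
  proof -
    have "\<pi> p \<in> \<pi> ` {1..i} \<longleftrightarrow> p \<in> {1..i}" using inj that by (intro inj_on_image_mem_iff) auto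
    then show ?thesis using that by (auto simp: ind_perm_def)
  qed
  have Az: "A (z i) p = (if p \<le> i then 1 else 0)" if "i \<le> ?k" "p \<le> ?k + 1" for i p
  proof -
    have "p = 0 \<or> p = ?k + 1 \<or> (1 \<le> p \<and> p \<le> ?k)" using that by linarith
    then consider "p = 0" | "p = ?k + 1" | "1 \<le> p" "p \<le> ?k" by blast
    then show ?thesis
    proof cases
      case 3
      have "A (z i) p = ind_perm \<pi> i $ (\<pi> p) * (y$(\<pi> p) * y$(\<pi> p))"
        using 3 by (simp add: A_def z_def algebra_simps)
      then show ?thesis using indc[OF 3 that(1)] ysq by simp
    qed (use that in \<open>auto simp: A_def\<close>)
  qed
  have Aaff: "A (a *\<^sub>R x1 + b *\<^sub>R x2) p = a * A x1 p + b * A x2 p" if "a + b = 1" for a b x1 x2 p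
    using that by (auto simp: A_def algebra_simps)
  have Vz: "\<forall>u\<in>V. \<exists>i\<le>?k. u = z i" using VV by (auto simp: Vpy_def z_def)
  have mono: "A x q \<le> A x p" if "p \<le> q" "q \<le> ?k+1" for p q
  proof -
    have "0 \<le> A x p - A x q"
    proof (rule hull_ge[where L="\<lambda>x. A x p - A x q", OF _ _ xh])
      show "A (a *\<^sub>R x1 + b *\<^sub>R x2) p - A (a *\<^sub>R x1 + b *\<^sub>R x2) q =
          a * (A x1 p - A x1 q) + b * (A x2 p - A x2 q)" if "a + b = 1" for a b x1 x2
        using Aaff[OF that] by (simp add: algebra_simps)
      show "\<forall>u\<in>V. 0 \<le> A u p - A u q"
        using Vz Az that by fastforce
    qed
    then show ?thesis by simp
  qed
  have A0: "A x 0 = 1" and Ak: "A x (?k+1) = 0" by (simp_all add: A_def)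
  have absx: "\<bar>x$(\<pi> p)\<bar> = A x p" if "1 \<le> p" "p \<le> ?k" for p
  proof -
    have "A x p \<ge> 0" using mono[of p "?k+1"] that Ak by simp
    then show ?thesis using that y1[of "\<pi> p"] by (auto simp: A_def)
  qed
  define P where "P = {p\<in>{1..?k}. c < \<bar>v$(\<pi> p)\<bar>}"
  have Pgt: "A x p > c" if "p \<in> P" for p
  proof -
    have p: "1 \<le> p" "p \<le> ?k" "c < \<bar>v$(\<pi> p)\<bar>" using that by (auto simp: P_def)
    have "\<bar>\<bar>v$(\<pi> p)\<bar> - c\<bar> \<ge> \<epsilon>" using vc by blast
    moreover have "\<bar>x$(\<pi> p) - v$(\<pi> p)\<bar> < \<epsilon>" using xv by blast
    ultimately have "\<bar>x$(\<pi> p)\<bar> > c" using p(3) by linarith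
    then show ?thesis using absx[OF p(1,2)] by simp
  qed
  have Plt: "A x p < c" if "p \<notin> P" "1 \<le> p" "p \<le> ?k" for p
  proof -
    have p: "\<not> c < \<bar>v$(\<pi> p)\<bar>" using that by (auto simp: P_def)
    have "\<bar>\<bar>v$(\<pi> p)\<bar> - c\<bar> \<ge> \<epsilon>" using vc by blast
    moreover have "\<bar>x$(\<pi> p) - v$(\<pi> p)\<bar> < \<epsilon>" using xv by blast
    ultimately have "\<bar>x$(\<pi> p)\<bar> < c" using p by linarith
    then show ?thesis using absx[OF that(2,3)] by simp
  qed
  have Pdc: "P = {1..card P}"
  proof (rule downclosed)
    show "finite P" by (simp add: P_def)
    show "0 \<notin> P" by (simp add: P_def)
    fix q p assume q: "q \<in> P" "1 \<le> p" "p \<le> q"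
    then have "q \<le> ?k" by (simp add: P_def)
    show "p \<in> P"
    proof (rule ccontr)
      assume "p \<notin> P"
      then have "A x p < c" using Plt q \<open>q \<le> ?k\<close> by simp
      moreover have "A x q \<le> A x p" using mono q \<open>q \<le> ?k\<close> by simp
      ultimately show False using Pgt[OF q(1)] by simp
    qed
  qed
  define m where "m = card P"
  have mk: "m \<le> ?k"
  proof -
    have "P \<subseteq> {1..?k}" by (auto simp: P_def)
    then show ?thesis unfolding m_def by (metis card_atLeastAtMost card_mono diff_Suc_1 finite_atLeastAtMost)
  qed
  have PP: "p \<in> P \<longleftrightarrow> 1 \<le> p \<and> p \<le> m" for p
    using Pdc m_def by (metis atLeastAtMost_iff)
  have gap: "A x (m+1) < A x m"
  proof (cases "m = 0")
    case True
    then have "A x 1 < c" using Plt[of 1] PP kpos by simp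
    then show ?thesis using True A0 c1 by simp
  next
    case False
    then have gt: "A x m > c" using Pgt PP by simp
    show ?thesis
    proof (cases "m + 1 \<le> ?k")
      case True
      then have "A x (m+1) < c" using Plt[of "m+1"] PP by simp
      then show ?thesis using gt by simp
    next
      case False
      then have "m = ?k" using mk by simp
      then show ?thesis using gt Ak c0 by simp
    qed
  qed
  have zmV: "z m \<in> V"
  proof (rule ccontr)
    assume nz: "z m \<notin> V"
    have "0 \<le> A x (m+1) - A x m"
    proof (rule hull_ge[where L="\<lambda>x. A x (m+1) - A x m", OF _ _ xh])
      show "A (a *\<^sub>R x1 + b *\<^sub>R x2) (m+1) - A (a *\<^sub>R x1 + b *\<^sub>R x2) m =
          a * (A x1 (m+1) - A x1 m) + b * (A x2 (m+1) - A x2 m)" if "a + b = 1" for a b x1 x2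
        using Aaff[OF that] by (simp add: algebra_simps)
      show "\<forall>u\<in>V. 0 \<le> A u (m+1) - A u m"
      proof
        fix u assume "u \<in> V"
        then obtain i where i: "i \<le> ?k" "u = z i" using Vz by blast
        then have "i \<noteq> m" using nz \<open>u \<in> V\<close> by blast
        then show "0 \<le> A u (m+1) - A u m" using Az[of i "m+1"] Az[of i m] i mk by simp
      qed
    qed
    then show False using gap by simp
  qed
  have "(\<chi> j. if c < \<bar>v$j\<bar> then sgn (v$j) else 0) = z m"
  proof (rule vec_eq_iff[THEN iffD2], rule allI)
    fix j
    obtain p where p: "1 \<le> p" "p \<le> ?k" "j = \<pi> p" using surj by (metis UNIV_I atLeastAtMost_iff imageE)
    have zj: "z m $ j = (if p \<le> m then y$j else 0)" using indc[OF p(1,2) mk] p(3) by (simp add: z_def)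
    show "(\<chi> j. if c < \<bar>v$j\<bar> then sgn (v$j) else 0) $ j = z m $ j"
    proof (cases "p \<in> P")
      case True
      then have cv: "c < \<bar>v$j\<bar>" using p by (simp add: P_def)
      have "A x p > c" using Pgt True by simp
      then have yx: "y$j * x$j > c" using p by (simp add: A_def)
      have "\<bar>\<bar>v$j\<bar> - c\<bar> \<ge> \<epsilon>" using vc by blast
      moreover have "\<bar>x$j - v$j\<bar> < \<epsilon>" using xv by blast
      ultimately have "sgn (v$j) = y$j" using yx cv c0 y1[of j]
        by (cases "v$j > 0"; cases "v$j < 0") (auto simp: abs_if)
      then show ?thesis using zj cv True PP by simp
    next
      case False
      then have cv: "\<not> c < \<bar>v$j\<bar>" using p by (simp add: P_def)
      then show ?thesis using zj False PP p by simp
    qed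
  qed
  then show ?thesis using zmV by simp
qed




lemma ind_comp:
  fixes \<pi> :: "nat \<Rightarrow> 'k::finite"
  assumes "is_perm \<pi>" "1 \<le> p" "p \<le> CARD('k)" "i \<le> CARD('k)"
  shows "ind_perm \<pi> i $ (\<pi> p) = (if p \<le> i then 1 else 0)"
proof -
  have inj: "inj_on \<pi> {1..CARD('k)}" using assms(1) by (auto simp: is_perm_def bij_betw_def)
  have "\<pi> p \<in> \<pi> ` {1..i} \<longleftrightarrow> p \<in> {1..i}" using inj assms by (intro inj_on_image_mem_iff) auto
  then show ?thesis using assms by (auto simp: ind_perm_def)
qed

lemma ind_inj:
  fixes \<pi> :: "nat \<Rightarrow> 'k::finite"
  assumes "is_perm \<pi>" "i \<le> CARD('k)" "i' \<le> CARD('k)" "ind_perm \<pi> i = ind_perm \<pi> i'"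
  shows "i = i'"
proof (rule ccontr)
  assume ne: "i \<noteq> i'"
  have *: False if "a < b" "a \<le> CARD('k)" "b \<le> CARD('k)" "ind_perm \<pi> a = ind_perm \<pi> b" for a b
  proof -
    have "ind_perm \<pi> a $ (\<pi> b) = ind_perm \<pi> b $ (\<pi> b)" using that by simp
    then show False using ind_comp[OF assms(1), of b a] ind_comp[OF assms(1), of b b] that by simp
  qed
  show False
  proof (cases "i < i'")
    case True then show False using *[of i i'] assms by simp
  next
    case False then have "i' < i" using ne by simp
    then show False using *[of i' i] assms by simp
  qed
qed

lemma tel:
  fixes f :: "nat \<Rightarrow> real"
  assumes "m \<le> Suc n"
  shows "(\<Sum>i = m..n. f i - f (Suc i)) = f m - f (Suc n)"
proof -
  have "(\<Sum>i = m..n. f i - f (Suc i)) = - (\<Sum>i = m..n. f (Suc i) - f i)"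
    by (simp add: sum_negf[symmetric])
  also have "\<dots> = f m - f (Suc n)" using sum_Suc_diff[OF assms, of f] by simp
  finally show ?thesis .
qed

lemma stair:
  fixes \<pi> :: "nat \<Rightarrow> 'k::finite" and f :: "nat \<Rightarrow> real"
  defines "k \<equiv> CARD('k)"
  assumes perm: "is_perm \<pi>" and f0: "f 0 = 1" and fk: "f (Suc k) = 0"
    and fm: "\<And>i. i \<le> k \<Longrightarrow> f (Suc i) \<le> f i" and i0: "i0 \<le> k" and fi0: "f i0 = f (Suc i0)"
  shows "(\<chi> j. f (inv_into {1..k} \<pi> j)) \<in> convex hull ((\<lambda>i. ind_perm \<pi> i * 1) ` ({0..k} - {i0}))"
proof -
  define z where "z i = ind_perm \<pi> i * (1::real^'k)" for i
  define I where "I = {0..k} - {i0}"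
  define \<mu> where "\<mu> i = f i - f (Suc i)" for i
  have bij: "bij_betw \<pi> {1..k} UNIV" using perm by (simp add: is_perm_def k_def)
  have mem: "(\<Sum>i\<in>I. \<mu> i *\<^sub>R z i) \<in> convex hull (z ` I)"
  proof (rule convex_sum)
    show "finite I" by (simp add: I_def)
    show "convex (convex hull (z ` I))" by simp
    have "(\<Sum>i\<in>{0..k}. \<mu> i) = \<mu> i0 + (\<Sum>i\<in>I. \<mu> i)" unfolding I_def using i0 by (intro sum.remove) auto
    moreover have "(\<Sum>i\<in>{0..k}. \<mu> i) = 1" unfolding \<mu>_def using tel[of 0 k f] f0 fk by simp
    ultimately show "(\<Sum>i\<in>I. \<mu> i) = 1" using fi0 by (simp add: \<mu>_def)
    show "\<And>i. i \<in> I \<Longrightarrow> 0 \<le> \<mu> i" using fm by (auto simp: I_def \<mu>_def)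
    show "\<And>i. i \<in> I \<Longrightarrow> z i \<in> convex hull (z ` I)" by (simp add: hull_inc)
  qed
  have "(\<Sum>i\<in>{0..k}. \<mu> i *\<^sub>R z i) = \<mu> i0 *\<^sub>R z i0 + (\<Sum>i\<in>I. \<mu> i *\<^sub>R z i)"
    unfolding I_def using i0 by (intro sum.remove) auto
  then have sumeq: "(\<Sum>i\<in>I. \<mu> i *\<^sub>R z i) = (\<Sum>i\<in>{0..k}. \<mu> i *\<^sub>R z i)" using fi0 by (simp add: \<mu>_def)
  have veq: "(\<Sum>i\<in>{0..k}. \<mu> i *\<^sub>R z i) = (\<chi> j. f (inv_into {1..k} \<pi> j))"
  proof (rule vec_eq_iff[THEN iffD2], rule allI)
    fix j
    obtain p where p: "p \<in> {1..k}" "\<pi> p = j" using bij by (metis UNIV_I bij_betw_iff_bijections)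
    have ip: "inv_into {1..k} \<pi> j = p"
      using p bij by (metis bij_betw_def inv_into_f_f)
    have "(\<Sum>i\<in>{0..k}. \<mu> i *\<^sub>R z i) $ j = (\<Sum>i\<in>{0..k}. \<mu> i * (if p \<le> i then 1 else 0))"
      unfolding sum_component
    proof (rule sum.cong[OF refl])
      fix i assume "i \<in> {0..k}"
      then show "(\<mu> i *\<^sub>R z i) $ j = \<mu> i * (if p \<le> i then 1 else 0)"
        using ind_comp[OF perm, of p i] p by (simp add: z_def k_def)
    qed
    also have "\<dots> = (\<Sum>i\<in>{0..k}. if p \<le> i then \<mu> i else 0)" by (intro sum.cong) auto
    also have "\<dots> = (\<Sum>i\<in>{i\<in>{0..k}. p \<le> i}. \<mu> i)" by (rule sym, rule sum.inter_filter) simp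
    also have "{i\<in>{0..k}. p \<le> i} = {p..k}" by auto
    also have "(\<Sum>i\<in>{p..k}. \<mu> i) = f p" unfolding \<mu>_def using tel[of p k f] p fk by simp
    finally show "(\<Sum>i\<in>{0..k}. \<mu> i *\<^sub>R z i) $ j = (\<chi> j. f (inv_into {1..k} \<pi> j)) $ j"
      using ip by simp
  qed
  show ?thesis using mem sumeq veq unfolding z_def I_def by simp
qed




lemma dir1:
  assumes e: "\<epsilon> > 0" and le: "\<epsilon> \<le> 1 / (2 * real CARD('k))"
  shows "psi_hat \<epsilon> (u::real^'k::finite) \<noteq> {}"
proof -
  define v where "v = boxed u"
  have k0: "real CARD('k) > 0" by simp
  have fU: "finite (UNIV::'k set)" by simp
  have "2 * \<epsilon> * real CARD('k) \<le> 1" using le k0 by (simp add: field_simps)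
  then have "2 * \<epsilon> * real (card (UNIV::'k set)) \<le> 1 - 0" by simp
  from thresh[OF fU e this, of "\<lambda>j. \<bar>v$j\<bar>"] obtain c where
    c: "0 \<le> c" "c \<le> 1" "\<forall>j. \<epsilon> \<le> \<bar>\<bar>v$j\<bar> - c\<bar>" by auto
  define w where "w = (\<chi> j. if c < \<bar>v$j\<bar> then sgn (v$j) else 0)"
  have "w \<in> psi_hat \<epsilon> u"
    unfolding psi_hat_def
  proof (rule InterI)
    fix V assume "V \<in> {V \<in> Vface. dinf (convex hull V) (boxed u) < ereal \<epsilon>}"
    then have VF: "V \<in> Vface" and d: "dinf (convex hull V) v < ereal \<epsilon>" by (auto simp: v_def)
    from d obtain a where a: "a \<in> convex hull V" "ereal (linf (a - v)) < ereal \<epsilon>"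
      unfolding dinf_def by (auto simp: Inf_less_iff)
    have av: "\<forall>j. \<bar>a$j - v$j\<bar> < \<epsilon>"
    proof
      fix j
      have "\<bar>(a - v)$j\<bar> \<le> linf (a - v)" unfolding linf_def by (rule Max_ge) auto
      then show "\<bar>a$j - v$j\<bar> < \<epsilon>" using a(2) by simp
    qed
    from VF obtain \<pi> y where "is_perm \<pi>" "y \<in> signvecs" "V \<subseteq> Vpy \<pi> y" unfolding Vface_def by auto
    then show "w \<in> V" unfolding w_def using key[OF _ _ _ a(1) av c(3) c(1) c(2) e] by blast
  qed
  then show ?thesis by auto
qed

lemma dir2:
  assumes gt: "\<epsilon> > 1 / (2 * real CARD('k))"
  shows "\<exists>u::real^'k::finite. psi_hat \<epsilon> u = {}"
proof -
  define k where "k = CARD('k)"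
  have k1: "k \<ge> 1" by (simp add: k_def Suc_le_eq)
  obtain \<pi> :: "nat \<Rightarrow> 'k" where bij: "bij_betw \<pi> {1..k} UNIV"
    using finite_same_card_bij[of "{1..k}" "UNIV::'k set"] by (auto simp: k_def)
  have perm: "is_perm \<pi>" using bij by (simp add: is_perm_def k_def)
  define d where "d = 1 / (2 * real k)"
  have d0: "d > 0" and dk: "real k * d = 1/2" using k1 by (auto simp: d_def)
  have de: "d < \<epsilon>" using gt by (simp add: d_def k_def)
  have dle: "real i * d \<le> 1/2" if "i \<le> k" for i
    using mult_right_mono[of "real i" "real k" d] that d0 dk by simp
  have dge: "real i * d \<ge> 0" for i using d0 by simp
  have dsuc: "real (Suc i) * d = real i * d + d" for i by (simp add: algebra_simps)
  define ip where "ip = inv_into {1..k} \<pi>"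
  have ipr: "ip j \<in> {1..k}" for j
    unfolding ip_def using bij by (metis UNIV_I bij_betw_def inv_into_into)
  define g where "g p = 1 - 2 * (real p * d) + d" for p :: nat
  define h where "h i0 = 1 - 2 * (real i0 * d)" for i0 :: nat
  have gh: "g p = h p + d" for p by (simp add: g_def h_def)
  have hsuc: "h (Suc p) = h p - 2 * d" for p by (simp add: h_def algebra_simps)
  have h0: "h 0 = 1" by (simp add: h_def)
  have hk: "h k = 0" by (simp add: h_def dk)
  have hle1: "h p \<le> 1" for p using dge[of p] by (simp add: h_def)
  have hge0: "h p \<ge> 0" if "p \<le> k" for p using dle[OF that] by (simp add: h_def)
  define f where "f i0 p = (if p = 0 then 1 else if p = Suc k then 0
      else if p = i0 \<or> p = Suc i0 then h i0 else g p)" for i0 p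
  define v where "v = (\<chi> j. g (ip j))"
  define z where "z i = ind_perm \<pi> i * (1::real^'k)" for i
  define F where "F i0 = z ` ({0..k} - {i0})" for i0
  have g01: "0 < g p \<and> g p < 1" if "1 \<le> p" "p \<le> k" for p
  proof -
    have "real p * d \<ge> d" using that d0 by simp
    then show ?thesis using dle[OF that(2)] d0 unfolding g_def by linarith
  qed
  have bv: "boxed v = v"
  proof (rule vec_eq_iff[THEN iffD2], rule allI)
    fix j
    have "0 < v$j" "v$j < 1" using g01 ipr[of j] by (auto simp: v_def)
    then show "boxed v $ j = v $ j" by (simp add: boxed_def)
  qed
  have one_sv: "(1::real^'k) \<in> signvecs" by (simp add: signvecs_def)
  have Ffa: "F i0 \<in> Vface" for i0
  proof -
    have "F i0 \<subseteq> Vpy \<pi> 1" by (auto simp: F_def z_def Vpy_def k_def)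
    then show ?thesis unfolding Vface_def using perm one_sv by blast
  qed
  have Fd: "dinf (convex hull (F i0)) (boxed v) < ereal \<epsilon>" if i0: "i0 \<le> k" for i0
  proof -
    define X where "X = (\<chi> j. f i0 (ip j))"
    have fm: "f i0 (Suc i) \<le> f i0 i" if "i \<le> k" for i
      using that i0 k1 d0 hle1[of i0] hge0[OF i0] hle1[of i] hge0[OF that]
      unfolding f_def by (auto simp: gh hsuc h0 hk)
    have fi0: "f i0 i0 = f i0 (Suc i0)"
      using i0 k1 unfolding f_def by (auto simp: gh hsuc h0 hk)
    have "(\<chi> j. f i0 (inv_into {1..CARD('k)} \<pi> j)) \<in> convex hull ((\<lambda>i. ind_perm \<pi> i * 1) ` ({0..CARD('k)} - {i0}))"
      unfolding k_def[symmetric]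
    proof (rule stair[OF perm, unfolded k_def[symmetric]])
      show "f i0 0 = 1" by (simp add: f_def)
      show "f i0 (Suc k) = 0" by (simp add: f_def)
      show "\<And>i. i \<le> k \<Longrightarrow> f i0 (Suc i) \<le> f i0 i" by (rule fm)
      show "i0 \<le> k" by (rule i0)
      show "f i0 i0 = f i0 (Suc i0)" by (rule fi0)
    qed
    then have "X \<in> convex hull (F i0)"
      unfolding X_def F_def z_def ip_def k_def by simp
    moreover have "linf (X - v) \<le> d"
      unfolding linf_def
    proof (rule Max.boundedI)
      show "finite (range (\<lambda>j. \<bar>(X - v) $ j\<bar>))" by simp
      show "range (\<lambda>j. \<bar>(X - v) $ j\<bar>) \<noteq> {}" by simp
      fix a assume "a \<in> range (\<lambda>j. \<bar>(X - v) $ j\<bar>)"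
      then obtain j where a: "a = \<bar>f i0 (ip j) - g (ip j)\<bar>" by (auto simp: X_def v_def)
      have p: "1 \<le> ip j" "ip j \<le> k" using ipr[of j] by auto
      show "a \<le> d" unfolding a using p d0 dsuc[of i0]
        by (auto simp: f_def g_def h_def)
    qed
    ultimately have "dinf (convex hull (F i0)) v \<le> ereal d"
      unfolding dinf_def by (metis (mono_tags, lifting) Inf_lower2 ereal_less_eq(3) image_eqI)
    moreover have "ereal d < ereal \<epsilon>" using de by simp
    ultimately show ?thesis using bv by (metis le_less_trans)
  qed
  have "psi_hat \<epsilon> v = {}"
  proof (rule ccontr)
    assume "psi_hat \<epsilon> v \<noteq> {}"
    then obtain w where w: "w \<in> psi_hat \<epsilon> v" by blast
    have wF: "w \<in> F i0" if "i0 \<le> k" for i0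
      using w Ffa[of i0] Fd[OF that] unfolding psi_hat_def by blast
    have "w \<in> F 0" using wF by simp
    then obtain i where "i \<in> {0..k} - {0}" "w = z i" unfolding F_def by blast
    then have i: "i \<le> k" "w = z i" by auto
    from wF[OF i(1)] obtain i' where "i' \<in> {0..k} - {i}" "w = z i'" unfolding F_def by blast
    then have i': "i' \<le> k" "i' \<noteq> i" "w = z i'" by auto
    have "ind_perm \<pi> i = ind_perm \<pi> i'" using i i' by (simp add: z_def)
    then have "i = i'" using ind_inj[OF perm] i(1) i'(1) by (simp add: k_def)
    then show False using i' by simp
  qed
  then show ?thesis by blast
qed

theorem lemma8:
  fixes \<epsilon> :: real
  assumes "\<epsilon> > 0"
  shows "(\<forall>u :: real^'k::finite. psi_hat \<epsilon> u \<noteq> {}) \<longleftrightarrow> \<epsilon> \<le> 1 / (2 * real CARD('k))"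
proof
  assume H: "\<forall>u :: real^'k::finite. psi_hat \<epsilon> u \<noteq> {}"
  show "\<epsilon> \<le> 1 / (2 * real CARD('k))"
  proof (rule ccontr)
    assume "\<not> \<epsilon> \<le> 1 / (2 * real CARD('k))"
    then have "\<epsilon> > 1 / (2 * real CARD('k))" by simp
    from dir2[OF this] obtain u :: "real^'k" where "psi_hat \<epsilon> u = {}" by blast
    with H show False by blast
  qed
next
  assume "\<epsilon> \<le> 1 / (2 * real CARD('k))"
  then show "\<forall>u :: real^'k::finite. psi_hat \<epsilon> u \<noteq> {}" using dir1 assms by blast
qed


end
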